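(* Let $G$ be a connected graph. Then $\mathrm{id}^{\leq 3}(G)\leq \left\lceil\frac{|E(G)|+\tau_3(G)}{2}\right\rceil$.
   Context: All graphs are finite and simple. A triangle-transversal of $G$ is a set $F$ of edges such that $G\setminus F$ contains no triangle; $\tau_3(G)$ is the minimum size of a triangle-transversal. For an oriented graph $D$ and $X\subseteq V(D)$, the inversion of $X$ reverses every arc with both endvertices in $X$; a $(\leq p)$-inversion is the inversion of a set of at most $p$ vertices. $\mathrm{id}^{\leq p}(G)$ is the maximum, over all ordered pairs $(\vec G_1,\vec G_2)$ of orientations of $G$, of the minimum number of $(\leq p)$-inversions transforming $\vec G_1$ into $\vec G_2$. *)

theory Defs
  imports Complex_Main
begin

definition simple_graph :: "'a set \<Rightarrow> 'a set set \<Rightarrow> bool" where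
  "simple_graph V E \<longleftrightarrow> finite V \<and>
     (\<forall>e\<in>E. \<exists>u v. e = {u, v} \<and> u \<noteq> v \<and> u \<in> V \<and> v \<in> V)"

definition connected_graph :: "'a set \<Rightarrow> 'a set set \<Rightarrow> bool" where
  "connected_graph V E \<longleftrightarrow> V \<noteq> {} \<and>
     (\<forall>u\<in>V. \<forall>v\<in>V. (\<lambda>x y. {x, y} \<in> E)\<^sup>*\<^sup>* u v)"

definition has_triangle :: "'a set set \<Rightarrow> bool" where
  "has_triangle E \<longleftrightarrow> (\<exists>a b c. a \<noteq> b \<and> b \<noteq> c \<and> a \<noteq> c \<and>
      {a, b} \<in> E \<and> {b, c} \<in> E \<and> {a, c} \<in> E)"

definition triangle_transversal :: "'a set set \<Rightarrow> 'a set set \<Rightarrow> bool" where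
  "triangle_transversal E F \<longleftrightarrow> F \<subseteq> E \<and> \<not> has_triangle (E - F)"

definition tau3 :: "'a set set \<Rightarrow> nat" where
  "tau3 E = (LEAST k. \<exists>F. triangle_transversal E F \<and> card F = k)"

definition is_orientation :: "'a set set \<Rightarrow> ('a \<times> 'a) set \<Rightarrow> bool" where
  "is_orientation E A \<longleftrightarrow> (\<forall>(u, v)\<in>A. {u, v} \<in> E) \<and>
     (\<forall>u v. {u, v} \<in> E \<longrightarrow> ((u, v) \<in> A \<longleftrightarrow> (v, u) \<notin> A))"

definition invert :: "'a set \<Rightarrow> ('a \<times> 'a) set \<Rightarrow> ('a \<times> 'a) set" where
  "invert X A = {(u, v). (u, v) \<in> A \<and> \<not> (u \<in> X \<and> v \<in> X)}
              \<union> {(v, u) | u v. (u, v) \<in> A \<and> u \<in> X \<and> v \<in> X}"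

definition invert_seq :: "'a set list \<Rightarrow> ('a \<times> 'a) set \<Rightarrow> ('a \<times> 'a) set" where
  "invert_seq Xs A = fold invert Xs A"

definition inv_dist :: "nat \<Rightarrow> 'a set \<Rightarrow> ('a \<times> 'a) set \<Rightarrow> ('a \<times> 'a) set \<Rightarrow> nat" where
  "inv_dist p V A1 A2 = (LEAST k. \<exists>Xs. length Xs = k \<and>
      (\<forall>X\<in>set Xs. X \<subseteq> V \<and> card X \<le> p) \<and> invert_seq Xs A1 = A2)"

definition id_le :: "nat \<Rightarrow> 'a set \<Rightarrow> 'a set set \<Rightarrow> nat" where
  "id_le p V E = Max {inv_dist p V A1 A2 | A1 A2. is_orientation E A1 \<and> is_orientation E A2}"

end

theory Submission
  imports Defs
begin


abbreviation reach :: "'a set set \<Rightarrow> 'a \<Rightarrow> 'a \<Rightarrow> bool" where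
  "reach H \<equiv> (\<lambda>a b. {a, b} \<in> H)\<^sup>*\<^sup>*"

lemma reach_sub_B:
  assumes "reach H' x w"
  shows "reach {e\<in>H'. e \<inter> {w. reach H' x w} \<noteq> {}} x w"
  using assms
proof (induction rule: rtranclp_induct)
  case base
  then show ?case by simp
next
  case (step y z)
  have "{y, z} \<in> {e\<in>H'. e \<inter> {w. reach H' x w} \<noteq> {}}" using step by auto
  then show ?case using step.IH by (meson rtranclp.rtrancl_into_rtrancl)
qed

lemma reach_sub_A:
  assumes "reach H r w" "x \<in> Rx" "\<And>a b. {a,b} \<in> H - {{r,x}} \<Longrightarrow> a \<in> Rx \<Longrightarrow> b \<in> Rx"
  shows "w \<notin> Rx \<longrightarrow> reach {e \<in> H - {{r,x}}. e \<inter> Rx = {}} r w"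
  using assms(1)
proof (induction rule: rtranclp_induct)
  case base
  then show ?case by simp
next
  case (step y z)
  show ?case
  proof
    assume zn: "z \<notin> Rx"
    show "reach {e \<in> H - {{r,x}}. e \<inter> Rx = {}} r z"
    proof (cases "{y,z} = {r,x}")
      case True
      then have "z = r \<or> z = x" by (metis doubleton_eq_iff)
      then show ?thesis using zn assms(2) by auto
    next
      case False
      then have yz: "{y,z} \<in> H - {{r,x}}" using step by auto
      have "y \<notin> Rx" using assms(3)[OF yz] zn by blast
      then have "reach {e \<in> H - {{r,x}}. e \<inter> Rx = {}} r y" using step.IH by blast
      moreover have "{y,z} \<in> {e \<in> H - {{r,x}}. e \<inter> Rx = {}}" using yz zn \<open>y \<notin> Rx\<close> by auto
      ultimately show ?thesis by (meson rtranclp.rtrancl_into_rtrancl)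
    qed
  qed
qed


definition twoset :: "'a set set \<Rightarrow> bool" where
  "twoset H \<longleftrightarrow> (\<forall>e\<in>H. \<exists>u v. e = {u,v} \<and> u \<noteq> v)"

lemma twosetD:
  assumes "twoset E" "e \<in> E"
  obtains u v where "e = {u,v}" "u \<noteq> v"
proof -
  have "\<exists>u v. e = {u,v} \<and> u \<noteq> v" using assms unfolding twoset_def by (rule bspec)
  then show ?thesis using that by blast
qed

lemma decomp:
  assumes "finite H" "twoset H" "\<forall>e\<in>H. \<forall>w\<in>e. reach H r w"
  shows "\<exists>P Sg. (\<forall>(a,b,c)\<in>set P. {a,b}\<in>H \<and> {b,c}\<in>H \<and> a\<noteq>b \<and> b\<noteq>c \<and> a\<noteq>c)
     \<and> set Sg \<subseteq> H \<and> length Sg \<le> 1 \<and> (\<forall>e\<in>set Sg. r \<in> e)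
     \<and> H \<subseteq> (\<Union>(a,b,c)\<in>set P. {{a,b},{b,c}}) \<union> set Sg
     \<and> 2 * length P + length Sg \<le> card H"
  using assms
proof (induction "card H" arbitrary: H r rule: less_induct)
  case less
  show ?case
  proof (cases "H = {}")
    case True
    then show ?thesis by (rule_tac x="[]" in exI, rule_tac x="[]" in exI) auto
  next
    case False
    then obtain e where eH: "e \<in> H" by blast
    then obtain u v where uv: "e = {u,v}" "u \<noteq> v" using less.prems(2) unfolding twoset_def by blast
    have ru: "reach H r u" using less.prems(3) eH uv by blast
    obtain x where rx: "{r,x} \<in> H"
    proof (cases "u = r")
      case True
      then show ?thesis using that eH uv by blast
    next
      case False
      from ru False show ?thesis
        by (cases rule: converse_rtranclpE) (auto intro: that)
    qed
    have rnx: "r \<noteq> x"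
    proof
      assume "r = x"
      then have "{r} \<in> H" using rx by simp
      then obtain p q where "{r} = {p,q}" "p \<noteq> q" using less.prems(2) unfolding twoset_def by blast
      then show False by (metis doubleton_eq_iff insert_absorb2)
    qed
    define H' where "H' = H - {{r,x}}"
    define Rx where "Rx = {w. reach H' x w}"
    define B where "B = {e\<in>H'. e \<inter> Rx \<noteq> {}}"
    define A where "A = {e\<in>H'. e \<inter> Rx = {}}"
    have xRx: "x \<in> Rx" unfolding Rx_def by simp
    have closed: "b \<in> Rx" if "{a,b} \<in> H'" "a \<in> Rx" for a b
      using that unfolding Rx_def by (auto intro: rtranclp.rtrancl_into_rtrancl)
    have closed': "a \<in> Rx" if "{a,b} \<in> H'" "b \<in> Rx" for a b
      using closed[of b a] that by (simp add: insert_commute)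
    have Bconn: "\<forall>e\<in>B. \<forall>w\<in>e. reach B x w"
    proof (intro ballI)
      fix e w assume eB: "e \<in> B" and we: "w \<in> e"
      from eB have eH': "e \<in> H'" unfolding B_def by auto
      then obtain p q where pq: "e = {p,q}" using less.prems(2) unfolding twoset_def H'_def by blast
      have "p \<in> Rx \<or> q \<in> Rx" using eB pq unfolding B_def by auto
      then have "p \<in> Rx \<and> q \<in> Rx" using closed closed' eH' pq by blast
      then have "w \<in> Rx" using we pq by auto
      then have "reach H' x w" unfolding Rx_def by simp
      from reach_sub_B[OF this] show "reach B x w" unfolding B_def Rx_def by simp
    qed
    have Aconn: "\<forall>e\<in>A. \<forall>w\<in>e. reach A r w"
    proof (intro ballI)
      fix e w assume eA: "e \<in> A" and we: "w \<in> e"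
      have "reach H r w" using less.prems(3) eA we unfolding A_def H'_def by blast
      moreover have "w \<notin> Rx" using eA we unfolding A_def by auto
      ultimately show "reach A r w"
        using reach_sub_A[of H r w x Rx] xRx closed unfolding A_def H'_def by blast
    qed
    have finH': "finite H'" using less.prems(1) unfolding H'_def by simp
    have cH': "card H' < card H" unfolding H'_def using rx less.prems(1)
      by (intro card_Diff1_less)
    have finA: "finite A" and finB: "finite B" using finH' unfolding A_def B_def by auto
    have cA: "card A < card H" using cH' card_mono[OF finH', of A] unfolding A_def by auto
    have cB: "card B < card H" using cH' card_mono[OF finH', of B] unfolding B_def by auto
    have tA: "twoset A" and tB: "twoset B" using less.prems(2) unfolding twoset_def A_def B_def H'_def by auto
    have cardH: "card H = card A + card B + 1"
    proof -
      have "H' = A \<union> B" "A \<inter> B = {}" unfolding A_def B_def by auto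
      then have "card H' = card A + card B" using finA finB card_Un_disjoint by metis
      moreover have "card H = card H' + 1" unfolding H'_def using rx less.prems(1)
        by (metis card_Suc_Diff1 Suc_eq_plus1)
      ultimately show ?thesis by simp
    qed
    obtain PA SA where PA: "(\<forall>(a,b,c)\<in>set PA. {a,b}\<in>A \<and> {b,c}\<in>A \<and> a\<noteq>b \<and> b\<noteq>c \<and> a\<noteq>c)"
      "set SA \<subseteq> A" "length SA \<le> 1" "(\<forall>e\<in>set SA. r \<in> e)"
      "A \<subseteq> (\<Union>(a,b,c)\<in>set PA. {{a,b},{b,c}}) \<union> set SA"
      "2 * length PA + length SA \<le> card A"
      using less.hyps[OF cA finA tA Aconn] by blast
    obtain PB SB where PB: "(\<forall>(a,b,c)\<in>set PB. {a,b}\<in>B \<and> {b,c}\<in>B \<and> a\<noteq>b \<and> b\<noteq>c \<and> a\<noteq>c)"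
      "set SB \<subseteq> B" "length SB \<le> 1" "(\<forall>e\<in>set SB. x \<in> e)"
      "B \<subseteq> (\<Union>(a,b,c)\<in>set PB. {{a,b},{b,c}}) \<union> set SB"
      "2 * length PB + length SB \<le> card B"
      using less.hyps[OF cB finB tB Bconn] by blast
    have AH: "A \<subseteq> H" and BH: "B \<subseteq> H" and Hcov: "H \<subseteq> A \<union> B \<union> {{r,x}}"
      unfolding A_def B_def H'_def by auto
    have PA': "\<forall>(a,b,c)\<in>set PA. {a,b}\<in>H \<and> {b,c}\<in>H \<and> a\<noteq>b \<and> b\<noteq>c \<and> a\<noteq>c"
      using PA(1) AH by fast
    have PB': "\<forall>(a,b,c)\<in>set PB. {a,b}\<in>H \<and> {b,c}\<in>H \<and> a\<noteq>b \<and> b\<noteq>c \<and> a\<noteq>c"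
      using PB(1) BH by fast
    show ?thesis
    proof (cases SB)
      case (Cons eb SB')
      then have SBe: "SB = [eb]" using PB(3) by simp
      have ebB: "eb \<in> B" and xeb: "x \<in> eb" using PB(2,4) SBe by auto
      then obtain z where ebz: "eb = {x,z}" "x \<noteq> z"
        using tB unfolding twoset_def by (metis doubleton_eq_iff insertE singletonD)
      have "eb \<noteq> {r,x}" using ebB unfolding B_def H'_def by auto
      then have rz: "r \<noteq> z" using ebz by (auto simp: insert_commute)
      show ?thesis
      proof (rule exI[of _ "PA @ PB @ [(r,x,z)]"], rule exI[of _ SA], intro conjI)
        show "\<forall>(a,b,c)\<in>set (PA @ PB @ [(r,x,z)]). {a,b}\<in>H \<and> {b,c}\<in>H \<and> a\<noteq>b \<and> b\<noteq>c \<and> a\<noteq>c"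
          using PA' PB' rx ebB BH ebz rz rnx by auto
        show "H \<subseteq> (\<Union>(a,b,c)\<in>set (PA @ PB @ [(r,x,z)]). {{a,b},{b,c}}) \<union> set SA"
          using Hcov PA(5) PB(5) SBe ebz by auto
        show "2 * length (PA @ PB @ [(r,x,z)]) + length SA \<le> card H"
          using PA(6) PB(6) SBe cardH by simp
      qed (use PA AH in auto)
    next
      case Nil
      note SBn = Nil
      show ?thesis
      proof (cases SA)
        case (Cons ea SA')
        then have SAe: "SA = [ea]" using PA(3) by simp
        have eaA: "ea \<in> A" and rea: "r \<in> ea" using PA(2,4) SAe by auto
        then obtain y where eay: "ea = {r,y}" "r \<noteq> y"
          using tA unfolding twoset_def by (metis doubleton_eq_iff insertE singletonD)
        have "ea \<noteq> {r,x}" using eaA unfolding A_def H'_def by auto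
        then have xy: "x \<noteq> y" using eay by auto
        show ?thesis
        proof (rule exI[of _ "PA @ PB @ [(x,r,y)]"], rule exI[of _ "[]"], intro conjI)
          show "\<forall>(a,b,c)\<in>set (PA @ PB @ [(x,r,y)]). {a,b}\<in>H \<and> {b,c}\<in>H \<and> a\<noteq>b \<and> b\<noteq>c \<and> a\<noteq>c"
            using PA' PB' rx eaA AH eay xy rnx by (auto simp: insert_commute)
          show "H \<subseteq> (\<Union>(a,b,c)\<in>set (PA @ PB @ [(x,r,y)]). {{a,b},{b,c}}) \<union> set []"
            using Hcov PA(5) PB(5) SBn SAe eay by (auto simp: insert_commute)
          show "2 * length (PA @ PB @ [(x,r,y)]) + length [] \<le> card H"
            using PA(6) PB(6) SBn SAe cardH by simp
        qed auto
      next
        case Nil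
        show ?thesis
        proof (rule exI[of _ "PA @ PB"], rule exI[of _ "[{r,x}]"], intro conjI)
          show "\<forall>(a,b,c)\<in>set (PA @ PB). {a,b}\<in>H \<and> {b,c}\<in>H \<and> a\<noteq>b \<and> b\<noteq>c \<and> a\<noteq>c"
            using PA' PB' by auto
          show "H \<subseteq> (\<Union>(a,b,c)\<in>set (PA @ PB). {{a,b},{b,c}}) \<union> set [{r,x}]"
            using Hcov PA(5) PB(5) SBn Nil by auto
          show "2 * length (PA @ PB) + length [{r,x}] \<le> card H"
            using PA(6) PB(6) SBn Nil cardH by simp
        qed (use rx in auto)
      qed
    qed
  qed
qed



definition rev_arcs :: "'a set set \<Rightarrow> ('a \<times> 'a) set \<Rightarrow> ('a \<times> 'a) set" where
  "rev_arcs S A = {(u,v). ((u,v)\<in>A \<and> {u,v}\<notin>S) \<or> ((v,u)\<in>A \<and> {u,v}\<in>S)}"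

definition symd :: "'b set \<Rightarrow> 'b set \<Rightarrow> 'b set" where
  "symd S T = (S - T) \<union> (T - S)"

definition eff :: "'a set set \<Rightarrow> 'a set \<Rightarrow> 'a set set" where
  "eff E X = {e\<in>E. e \<subseteq> X}"

fun xsum :: "'a set set \<Rightarrow> 'a set list \<Rightarrow> 'a set set" where
  "xsum E [] = {}"
| "xsum E (X # Xs) = symd (eff E X) (xsum E Xs)"

lemma invert_eq:
  assumes "\<forall>(u,v)\<in>A. {u,v}\<in>E"
  shows "invert X A = rev_arcs (eff E X) A"
  using assms unfolding invert_def rev_arcs_def eff_def
  by (auto simp: insert_commute)

lemma rev_rev: "rev_arcs S (rev_arcs T A) = rev_arcs (symd S T) A"
  unfolding rev_arcs_def symd_def by (auto simp: insert_commute)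

lemma rev_edges:
  assumes "\<forall>(u,v)\<in>A. {u,v}\<in>E"
  shows "\<forall>(u,v)\<in>rev_arcs T A. {u,v}\<in>E"
  using assms unfolding rev_arcs_def by (auto simp: insert_commute)

lemma rev_empty: "rev_arcs {} A = A"
  unfolding rev_arcs_def by auto

lemma invert_seq_eq:
  assumes "\<forall>(u,v)\<in>A. {u,v}\<in>E"
  shows "invert_seq Xs A = rev_arcs (xsum E Xs) A"
  using assms
proof (induction Xs arbitrary: A)
  case Nil
  then show ?case by (simp add: invert_seq_def rev_empty)
next
  case (Cons X Xs)
  have "invert_seq (X # Xs) A = invert_seq Xs (invert X A)" by (simp add: invert_seq_def)
  also have "\<dots> = invert_seq Xs (rev_arcs (eff E X) A)" using invert_eq[OF Cons.prems] by simp
  also have "\<dots> = rev_arcs (xsum E Xs) (rev_arcs (eff E X) A)"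
    using Cons.IH rev_edges[OF Cons.prems] by blast
  also have "\<dots> = rev_arcs (xsum E (X # Xs)) A"
    by (simp add: rev_rev symd_def Un_commute)
  finally show ?case .
qed

lemma xsum_append: "xsum E (Xs @ Ys) = symd (xsum E Xs) (xsum E Ys)"
  by (induction Xs) (auto simp: symd_def)

lemma orient_diff:
  assumes "is_orientation E A1" "is_orientation E A2"
  shows "A2 = rev_arcs {e\<in>E. \<exists>u v. e = {u,v} \<and> (u,v)\<in>A1 \<and> (v,u)\<in>A2} A1"
proof -
  define D where "D = {e\<in>E. \<exists>u v. e = {u,v} \<and> (u,v)\<in>A1 \<and> (v,u)\<in>A2}"
  have a1: "{u,v}\<in>E" if "(u,v)\<in>A1" for u v using assms(1) that unfolding is_orientation_def by auto
  have a2: "{u,v}\<in>E" if "(u,v)\<in>A2" for u v using assms(2) that unfolding is_orientation_def by auto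
  have o1: "(u,v)\<in>A1 \<longleftrightarrow> (v,u)\<notin>A1" if "{u,v}\<in>E" for u v using assms(1) that unfolding is_orientation_def by auto
  have o2: "(u,v)\<in>A2 \<longleftrightarrow> (v,u)\<notin>A2" if "{u,v}\<in>E" for u v using assms(2) that unfolding is_orientation_def by auto
  have inD: "{u,v} \<in> D \<longleftrightarrow> {u,v}\<in>E \<and> (((u,v)\<in>A1 \<and> (v,u)\<in>A2) \<or> ((v,u)\<in>A1 \<and> (u,v)\<in>A2))" for u v
    unfolding D_def by (auto simp: doubleton_eq_iff)
  have "(u,v) \<in> A2 \<longleftrightarrow> (u,v) \<in> rev_arcs D A1" for u v
  proof
    assume h: "(u,v) \<in> A2"
    then have e: "{u,v}\<in>E" by (rule a2)
    have e': "{v,u}\<in>E" using e by (simp add: insert_commute)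
    have nv: "(v,u)\<notin>A2" using o2[OF e] h by simp
    show "(u,v) \<in> rev_arcs D A1"
    proof (cases "(u,v)\<in>A1")
      case True
      then have "(v,u)\<notin>A1" using o1[OF e] by simp
      then have "{u,v}\<notin>D" using inD nv by blast
      then show ?thesis using True unfolding rev_arcs_def by auto
    next
      case False
      then have "(v,u)\<in>A1" using o1[OF e] by simp
      then show ?thesis using h e inD unfolding rev_arcs_def by auto
    qed
  next
    assume h: "(u,v) \<in> rev_arcs D A1"
    then consider "(u,v)\<in>A1" "{u,v}\<notin>D" | "(v,u)\<in>A1" "{u,v}\<in>D" unfolding rev_arcs_def by auto
    then show "(u,v)\<in>A2"
    proof cases
      case 1
      then have e: "{u,v}\<in>E" using a1 by blast
      show ?thesis using 1 e inD o2[OF e] by blast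
    next
      case 2
      then have e: "{u,v}\<in>E" using inD by blast
      show ?thesis using 2 e inD o1[OF e] by blast
    qed
  qed
  then show ?thesis unfolding D_def[symmetric] by auto
qed



lemma blocks_real:
  assumes "\<forall>Bk\<in>set Bks. \<forall>U\<subseteq>Bk. \<exists>X. X \<subseteq> V \<and> card X \<le> 3 \<and> eff E X \<inter> H = U"
  shows "S \<subseteq> \<Union>(set Bks) \<Longrightarrow> \<exists>Xs. length Xs = length Bks \<and> (\<forall>X\<in>set Xs. X \<subseteq> V \<and> card X \<le> 3) \<and> xsum E Xs \<inter> H = S"
  using assms
proof (induction Bks arbitrary: S)
  case Nil
  then show ?case by auto
next
  case (Cons Bk Bks)
  have sb: "S - Bk \<subseteq> \<Union>(set Bks)" using Cons.prems(1) by auto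
  have "\<forall>Bk\<in>set Bks. \<forall>U\<subseteq>Bk. \<exists>X. X \<subseteq> V \<and> card X \<le> 3 \<and> eff E X \<inter> H = U" using Cons.prems(2) by simp
  from Cons.IH[OF sb this] obtain Xs where Xs: "length Xs = length Bks" "\<forall>X\<in>set Xs. X \<subseteq> V \<and> card X \<le> 3" "xsum E Xs \<inter> H = S - Bk"
    by blast
  obtain X where X: "X \<subseteq> V" "card X \<le> 3" "eff E X \<inter> H = S \<inter> Bk"
    using Cons.prems(2) by (meson Int_lower2 list.set_intros(1))
  have "xsum E (X # Xs) \<inter> H = S"
    using Xs(3) X(3) by (auto simp: symd_def)
  then show ?case using Xs X by (intro exI[of _ "X # Xs"]) auto
qed

lemma sub2:
  assumes "f = {u,v}" "u \<noteq> v" "f \<subseteq> {a,b}"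
  shows "f = {a,b}"
proof -
  have "u \<in> {a,b}" "v \<in> {a,b}" using assms by auto
  then show ?thesis using assms(1,2) by (cases "u = a") (auto simp: insert_commute)
qed

lemma three_sub:
  assumes "e = {u,v}" "u \<noteq> v" "e \<subseteq> {a,b,c}"
  shows "e = {a,b} \<or> e = {b,c} \<or> e = {a,c}"
proof -
  have "u \<in> {a,b,c}" "v \<in> {a,b,c}" using assms by auto
  then show ?thesis using assms(1,2)
    by (elim insertE; simp add: insert_commute)
qed

lemma eff2:
  assumes tw: "twoset E" and ab: "{a,b} \<in> H" and HE: "H \<subseteq> E"
  shows "eff E {a,b} \<inter> H = {{a,b}}"
proof -
  have "f = {a,b}" if "f \<in> E" "f \<subseteq> {a,b}" for f
  proof -
    note th = that
    obtain u v where uv: "f = {u,v}" "u \<noteq> v" by (rule twosetD[OF tw th(1)])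
    show ?thesis by (rule sub2[OF uv th(2)])
  qed
  show ?thesis
  proof (rule set_eqI, rule iffI)
    fix g assume "g \<in> eff E {a,b} \<inter> H"
    then have "g \<in> E" "g \<subseteq> {a,b}" unfolding eff_def by auto
    then show "g \<in> {{a,b}}" using \<open>\<And>f. f \<in> E \<Longrightarrow> f \<subseteq> {a,b} \<Longrightarrow> f = {a,b}\<close> by blast
  next
    fix g assume "g \<in> {{a,b}}"
    then show "g \<in> eff E {a,b} \<inter> H" using ab HE unfolding eff_def by auto
  qed
qed

lemma eff0:
  assumes tw: "twoset E"
  shows "eff E {} \<inter> H = {}"
proof -
  have "{} \<notin> E"
  proof
    assume h0: "{} \<in> E"
    show False by (rule twosetD[OF tw h0]) simp
  qed
  then show ?thesis unfolding eff_def by auto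
qed

lemma pair_block:
  assumes tw: "twoset E" and ab: "{a,b}\<in>H" and bc: "{b,c}\<in>H" and d: "a\<noteq>b" "b\<noteq>c" "a\<noteq>c"
    and HE: "H \<subseteq> E" and ac: "{a,c} \<notin> H" and V: "{a,b,c} \<subseteq> V"
  shows "\<forall>U\<subseteq>{{a,b},{b,c}}. \<exists>X. X \<subseteq> V \<and> card X \<le> 3 \<and> eff E X \<inter> H = U"
proof (intro allI impI)
  fix U assume U: "U \<subseteq> {{a,b},{b,c}}"
  have eq3: "eff E {a,b,c} \<inter> H = {{a,b},{b,c}}"
  proof -
    have "e = {a,b} \<or> e = {b,c} \<or> e = {a,c}" if "e \<in> E" "e \<subseteq> {a,b,c}" for e
    proof -
      note th = that
      obtain u v where uv: "e = {u,v}" "u \<noteq> v" by (rule twosetD[OF tw th(1)])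
      show ?thesis by (rule three_sub[OF uv th(2)])
    qed
    note k = this
    show ?thesis
    proof (rule set_eqI, rule iffI)
      fix g assume g: "g \<in> eff E {a,b,c} \<inter> H"
      then have "g \<in> E" "g \<subseteq> {a,b,c}" unfolding eff_def by auto
      then have "g = {a,b} \<or> g = {b,c} \<or> g = {a,c}" by (rule k)
      then show "g \<in> {{a,b},{b,c}}" using g ac by auto
    next
      fix g assume "g \<in> {{a,b},{b,c}}"
      then show "g \<in> eff E {a,b,c} \<inter> H" using ab bc HE unfolding eff_def by auto
    qed
  qed
  have c3: "card {a,b,c} \<le> 3" by (simp add: card_insert_if)
  have c2: "card {a,b} \<le> 3" "card {b,c} \<le> 3" by (simp_all add: card_insert_if)
  have "U = {} \<or> U = {{a,b}} \<or> U = {{b,c}} \<or> U = {{a,b},{b,c}}" using U by blast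
  then consider "U = {}" | "U = {{a,b}}" | "U = {{b,c}}" | "U = {{a,b},{b,c}}" by blast
  then show "\<exists>X. X \<subseteq> V \<and> card X \<le> 3 \<and> eff E X \<inter> H = U"
  proof cases
    case 1 then show ?thesis using eff0[OF tw] by (intro exI[of _ "{}"]) simp
  next
    case 2 then show ?thesis using eff2[OF tw ab HE] V c2 by (intro exI[of _ "{a,b}"]) simp
  next
    case 3 then show ?thesis using eff2[OF tw bc HE] V c2 by (intro exI[of _ "{b,c}"]) simp
  next
    case 4 then show ?thesis using eq3 V c3 by (intro exI[of _ "{a,b,c}"]) simp
  qed
qed

lemma single_block:
  assumes tw: "twoset E" and e: "e \<in> H" and HE: "H \<subseteq> E" and V: "e \<subseteq> V"
  shows "\<forall>U\<subseteq>{e}. \<exists>X. X \<subseteq> V \<and> card X \<le> 3 \<and> eff E X \<inter> H = U"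
proof (intro allI impI)
  fix U assume U: "U \<subseteq> {e}"
  have eE: "e \<in> E" using e HE by blast
  obtain a b where ab: "e = {a,b}" "a \<noteq> b" by (rule twosetD[OF tw eE])
  have c2: "card {a,b} \<le> 3" by (simp add: card_insert_if)
  consider "U = {}" | "U = {e}" using U by blast
  then show "\<exists>X. X \<subseteq> V \<and> card X \<le> 3 \<and> eff E X \<inter> H = U"
  proof cases
    case 1 then show ?thesis using eff0[OF tw] by (intro exI[of _ "{}"]) simp
  next
    case 2 then show ?thesis using eff2[OF tw _ HE, of a b] e ab V c2 by (intro exI[of _ "{a,b}"]) simp
  qed
qed



lemma xsum_sub: "xsum E Xs \<subseteq> E"
  by (induction Xs) (auto simp: symd_def eff_def)

lemma eff_single:
  assumes "twoset E" "e \<in> E"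
  shows "eff E e = {e}"
proof -
  obtain a b where ab: "e = {a,b}" "a \<noteq> b" by (rule twosetD[OF assms])
  have "eff E {a,b} \<inter> E = {{a,b}}" by (rule eff2[OF assms(1) _ subset_refl]) (use assms(2) ab in simp)
  moreover have "eff E {a,b} \<subseteq> E" unfolding eff_def by auto
  ultimately show ?thesis using ab by auto
qed

lemma singles:
  assumes "finite T" "T \<subseteq> E" "twoset E" "\<forall>e\<in>E. e \<subseteq> V"
  shows "\<exists>Xs. length Xs = card T \<and> (\<forall>X\<in>set Xs. X \<subseteq> V \<and> card X \<le> 3) \<and> xsum E Xs = T"
  using assms
proof (induction T rule: finite_induct)
  case empty
  then show ?case by auto
next
  case (insert x T)
  then obtain Xs where Xs: "length Xs = card T" "\<forall>X\<in>set Xs. X \<subseteq> V \<and> card X \<le> 3" "xsum E Xs = T"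
    by auto
  have xE: "x \<in> E" using insert by auto
  obtain a b where ab: "x = {a,b}" "a \<noteq> b" by (rule twosetD[OF insert.prems(2) xE])
  have "card x \<le> 3" using ab by simp
  moreover have "x \<subseteq> V" using xE insert.prems(3) by auto
  moreover have "xsum E (x # Xs) = insert x T"
    using Xs(3) eff_single[OF insert.prems(2) xE] insert.hyps(2) by (auto simp: symd_def)
  ultimately show ?case using Xs insert.hyps by (intro exI[of _ "x # Xs"]) auto
qed

lemma ceil_bound:
  fixes k n :: nat
  assumes "2 * k \<le> n + 1"
  shows "int k \<le> \<lceil>real n / 2\<rceil>"
proof -
  have "real k - 1 < real n / 2" using assms by linarith
  then have "of_int (int k) - 1 < real n / 2" by simp
  then show ?thesis by (simp add: le_ceiling_iff)
qed

theorem mainTheorem8: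
  fixes V :: "'a set" and E :: "'a set set"
  assumes "simple_graph V E" and "connected_graph V E"
  shows "int (id_le 3 V E) \<le> \<lceil>(real (card E) + real (tau3 E)) / 2\<rceil>"
proof -
  have finV: "finite V" using assms(1) unfolding simple_graph_def by (rule conjunct1)
  have sg: "\<forall>e\<in>E. \<exists>u v. e = {u, v} \<and> u \<noteq> v \<and> u \<in> V \<and> v \<in> V"
    using assms(1) unfolding simple_graph_def by (rule conjunct2)
  have tw: "twoset E" unfolding twoset_def
  proof
    fix e assume "e \<in> E"
    from bspec[OF sg this] obtain u v where "e = {u, v}" "u \<noteq> v" by (elim exE conjE)
    then show "\<exists>u v. e = {u, v} \<and> u \<noteq> v" by (intro exI conjI)
  qed
  have EV: "\<forall>e\<in>E. e \<subseteq> V"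
  proof
    fix e assume "e \<in> E"
    from bspec[OF sg this] obtain u v where "e = {u, v}" "u \<in> V" "v \<in> V" by (elim exE conjE)
    then show "e \<subseteq> V" by simp
  qed
  have finE: "finite E" using EV finV by (meson Pow_iff finite_Pow_iff rev_finite_subset subsetI)
  have "triangle_transversal E E" unfolding triangle_transversal_def has_triangle_def by auto
  then have ex: "\<exists>k. \<exists>F. triangle_transversal E F \<and> card F = k" by blast
  have "\<exists>F. triangle_transversal E F \<and> card F = tau3 E" unfolding tau3_def by (rule LeastI_ex[OF ex])
  then obtain F where F: "triangle_transversal E F" "card F = tau3 E" by blast
  have Fmin: "tau3 E \<le> card F'" if "triangle_transversal E F'" for F'
    unfolding tau3_def by (rule Least_le) (use that in blast)
  define H where "H = E - F"
  have FE: "F \<subseteq> E" and notri: "\<not> has_triangle H" using F(1) unfolding triangle_transversal_def H_def by auto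
  have finF: "finite F" using FE finE finite_subset by blast
  have finH: "finite H" using finE unfolding H_def by simp
  have HE: "H \<subseteq> E" unfolding H_def by auto
  have twH: "twoset H" unfolding twoset_def
  proof
    fix e assume eH0: "e \<in> H"
    have "e \<in> E" by (rule subsetD[OF HE eH0])
    then show "\<exists>u v. e = {u, v} \<and> u \<noteq> v" by (rule bspec[OF tw[unfolded twoset_def]])
  qed
  have tri: "\<exists>z. {x,z} \<in> H \<and> {z,y} \<in> H" if xy: "{x,y} \<in> F" for x y
  proof -
    define F' where "F' = F - {{x,y}}"
    have "card F' < card F" unfolding F'_def using xy finF by (intro card_Diff1_less)
    then have "\<not> triangle_transversal E F'" using Fmin F(2) by fastforce
    moreover have "F' \<subseteq> E" using FE unfolding F'_def by auto
    ultimately have "has_triangle (E - F')" unfolding triangle_transversal_def by blast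
    then obtain a b c where abc: "a \<noteq> b" "b \<noteq> c" "a \<noteq> c" "{a,b} \<in> E - F'" "{b,c} \<in> E - F'" "{a,c} \<in> E - F'"
      unfolding has_triangle_def by blast
    have inH: "g \<in> H" if "g \<in> E - F'" "g \<noteq> {x,y}" for g
      using that unfolding H_def F'_def by auto
    have "\<not> ({a,b} \<in> H \<and> {b,c} \<in> H \<and> {a,c} \<in> H)" using notri abc unfolding has_triangle_def by blast
    then have "{a,b} = {x,y} \<or> {b,c} = {x,y} \<or> {a,c} = {x,y}" using inH abc by blast
    moreover have "{a,b} \<noteq> {b,c}" "{a,b} \<noteq> {a,c}" "{b,c} \<noteq> {a,c}" using abc by (auto simp: doubleton_eq_iff)
    ultimately consider "{a,b} = {x,y}" "{b,c} \<in> H" "{a,c} \<in> H"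
      | "{b,c} = {x,y}" "{a,b} \<in> H" "{a,c} \<in> H"
      | "{a,c} = {x,y}" "{a,b} \<in> H" "{b,c} \<in> H"
      using inH abc by metis
    then show ?thesis
    proof cases
      case 1
      then show ?thesis by (auto simp: doubleton_eq_iff insert_commute)
    next
      case 2
      then show ?thesis by (auto simp: doubleton_eq_iff insert_commute)
    next
      case 3
      then show ?thesis by (auto simp: doubleton_eq_iff insert_commute)
    qed
  qed
  have estep: "reach H x y" if "{x,y} \<in> E" for x y
  proof (cases "{x,y} \<in> H")
    case True
    then show ?thesis by auto
  next
    case False
    then have "{x,y} \<in> F" using that unfolding H_def by auto
    then obtain z where "{x,z} \<in> H" "{z,y} \<in> H" using tri by blast
    then show ?thesis by (meson converse_rtranclp_into_rtranclp r_into_rtranclp)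
  qed
  obtain r where rV: "r \<in> V" using assms(2) unfolding connected_graph_def by auto
  have reachV: "reach H r u" if "u \<in> V" for u
  proof -
    have "(\<lambda>x y. {x, y} \<in> E)\<^sup>*\<^sup>* r u" using assms(2) rV that unfolding connected_graph_def by blast
    then show ?thesis
    proof (induction rule: rtranclp_induct)
      case base
      then show ?case by simp
    next
      case (step y z)
      then show ?case using estep[of y z] by (meson rtranclp_trans)
    qed
  qed
  have conn: "\<forall>e\<in>H. \<forall>w\<in>e. reach H r w" using reachV EV HE by blast
  obtain P Sg where PS: "(\<forall>(a,b,c)\<in>set P. {a,b}\<in>H \<and> {b,c}\<in>H \<and> a\<noteq>b \<and> b\<noteq>c \<and> a\<noteq>c)"
     "set Sg \<subseteq> H" "length Sg \<le> 1"
     "H \<subseteq> (\<Union>(a,b,c)\<in>set P. {{a,b},{b,c}}) \<union> set Sg"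
     "2 * length P + length Sg \<le> card H"
    using decomp[OF finH twH conn] by blast
  define Bks where "Bks = map (\<lambda>(a,b,c). {{a,b},{b,c}}) P @ map (\<lambda>e. {e}) Sg"
  have Bks_len: "length Bks = length P + length Sg" unfolding Bks_def by simp
  have Bks_cov: "H \<subseteq> \<Union>(set Bks)" using PS(4) unfolding Bks_def by auto
  have Bks_ok: "\<forall>Bk\<in>set Bks. \<forall>U\<subseteq>Bk. \<exists>X. X \<subseteq> V \<and> card X \<le> 3 \<and> eff E X \<inter> H = U"
  proof
    fix Bk assume "Bk \<in> set Bks"
    then consider (p) a b c where "(a,b,c) \<in> set P" "Bk = {{a,b},{b,c}}" | (s) e where "e \<in> set Sg" "Bk = {e}"
      unfolding Bks_def by auto
    then show "\<forall>U\<subseteq>Bk. \<exists>X. X \<subseteq> V \<and> card X \<le> 3 \<and> eff E X \<inter> H = U"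
    proof cases
      case p
      then have h: "{a,b}\<in>H" "{b,c}\<in>H" "a\<noteq>b" "b\<noteq>c" "a\<noteq>c" using PS(1) by auto
      have ac: "{a,c} \<notin> H" using notri h unfolding has_triangle_def by blast
      have "{a,b,c} \<subseteq> V" using h HE EV by blast
      then show ?thesis using pair_block[OF tw h HE ac] p(2) by simp
    next
      case s
      then have "e \<in> H" using PS(2) by auto
      moreover then have "e \<subseteq> V" using HE EV by blast
      ultimately show ?thesis using single_block[OF tw _ HE] s(2) by simp
    qed
  qed
  define bnd where "bnd = (card E + tau3 E + 1) div 2"
  have cardH: "card H = card E - card F" unfolding H_def using FE finF by (simp add: card_Diff_subset)
  have cFE: "card F \<le> card E" using FE finE card_mono by blast
  have dist_le: "inv_dist 3 V A1 A2 \<le> bnd" if o1: "is_orientation E A1" and o2: "is_orientation E A2" for A1 A2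
  proof -
    define D where "D = {e\<in>E. \<exists>u v. e = {u,v} \<and> (u,v)\<in>A1 \<and> (v,u)\<in>A2}"
    have A2eq: "A2 = rev_arcs D A1" unfolding D_def by (rule orient_diff[OF o1 o2])
    have DE: "D \<subseteq> E" unfolding D_def by auto
    obtain Xs1 where X1: "length Xs1 = length Bks" "\<forall>X\<in>set Xs1. X \<subseteq> V \<and> card X \<le> 3" "xsum E Xs1 \<inter> H = D \<inter> H"
      using blocks_real[OF Bks_ok, of "D \<inter> H"] Bks_cov by blast
    define T where "T = symd (xsum E Xs1) D"
    have TF: "T \<subseteq> F" using X1(3) xsum_sub[of E Xs1] DE unfolding T_def symd_def H_def by blast
    have finT: "finite T" using TF finF finite_subset by blast
    obtain Xs2 where X2: "length Xs2 = card T" "\<forall>X\<in>set Xs2. X \<subseteq> V \<and> card X \<le> 3" "xsum E Xs2 = T"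
      using singles[OF finT _ tw EV] TF FE by blast
    have cT: "card T \<le> card F" using TF finF card_mono by blast
    have xs: "xsum E (Xs1 @ Xs2) = D" using X2(3) unfolding xsum_append T_def symd_def by auto
    have arcs: "\<forall>(u,v)\<in>A1. {u,v}\<in>E" using o1 unfolding is_orientation_def by blast
    have inv: "invert_seq (Xs1 @ Xs2) A1 = A2" using invert_seq_eq[OF arcs] xs A2eq by simp
    have valid: "\<forall>X\<in>set (Xs1 @ Xs2). X \<subseteq> V \<and> card X \<le> 3" using X1(2) X2(2) by auto
    have "inv_dist 3 V A1 A2 \<le> length (Xs1 @ Xs2)"
      unfolding inv_dist_def by (rule Least_le) (use inv valid in blast)
    also have "\<dots> \<le> bnd"
      using X1(1) X2(1) Bks_len PS(3) PS(5) cardH cT cFE F(2) unfolding bnd_def by simp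
    finally show ?thesis .
  qed
  define Or where "Or = {A. is_orientation E A}"
  have finOr: "finite Or"
  proof -
    have "Or \<subseteq> Pow (V \<times> V)" unfolding Or_def is_orientation_def using EV by fastforce
    then show ?thesis using finV by (meson finite_Pow_iff finite_SigmaI rev_finite_subset)
  qed
  define sel where "sel = (\<lambda>e::'a set. SOME w. w \<in> e)"
  define A0 where "A0 = {(u,v). {u,v} \<in> E \<and> u = sel {u,v}}"
  have A0: "is_orientation E A0"
    unfolding is_orientation_def
  proof (intro conjI allI impI)
    show "\<forall>(u,v)\<in>A0. {u,v} \<in> E" unfolding A0_def by auto
    fix u v assume e: "{u,v} \<in> E"
    then obtain p q where pq: "{u,v} = {p,q}" "p \<noteq> q" by (rule twosetD[OF tw])
    then have "u \<noteq> v" by (metis doubleton_eq_iff insert_absorb2)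
    moreover have "sel {u,v} \<in> {u,v}" unfolding sel_def by (rule someI[of _ u]) simp
    moreover have "{v,u} = {u,v}" by (simp add: insert_commute)
    ultimately show "(u,v) \<in> A0 \<longleftrightarrow> (v,u) \<notin> A0" using e unfolding A0_def by auto
  qed
  define S where "S = {inv_dist 3 V A1 A2 | A1 A2. is_orientation E A1 \<and> is_orientation E A2}"
  have "S = (\<lambda>(A1,A2). inv_dist 3 V A1 A2) ` (Or \<times> Or)" unfolding S_def Or_def by auto
  then have finS: "finite S" using finOr by simp
  have neS: "S \<noteq> {}" unfolding S_def using A0 by blast
  have "id_le 3 V E \<le> bnd" unfolding id_le_def S_def[symmetric]
    using finS neS dist_le unfolding S_def by (simp add: Max_le_iff) blast
  then have "2 * id_le 3 V E \<le> (card E + tau3 E) + 1" unfolding bnd_def by linarith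
  then have "int (id_le 3 V E) \<le> \<lceil>real (card E + tau3 E) / 2\<rceil>" by (rule ceil_bound)
  then show ?thesis by simp
qed

end
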